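(* Let $(T,[\cdot,\cdot],[\cdot,\cdot,\cdot],\alpha)$ be a Hom-Lie-Yamaguti algebra, and let $\nu:T\times T\to T$ be bilinear and $\omega:T\times T\times T\to T$ trilinear. For $\lambda\in\mathbb{K}$ set $$[x_1,x_2]_\lambda=[x_1,x_2]+\lambda\nu(x_1,x_2),\qquad [x_1,x_2,x_3]_\lambda=[x_1,x_2,x_3]+\lambda\omega(x_1,x_2,x_3).$$ Say that $(\nu,\omega)$ generates a $\lambda$-parameter infinitesimal deformation of $T$ if $(T,[\cdot,\cdot]_\lambda,[\cdot,\cdot,\cdot]_\lambda,\alpha)$ is a Hom-Lie-Yamaguti algebra for every $\lambda$. Then $(\nu,\omega)$ generates a $\lambda$-parameter infinitesimal deformation of $T$ if and only if the following two conditions hold: (i) $(T,\nu,\omega,\alpha)$ is a Hom-Lie-Yamaguti algebra of deformation type; (ii) $(\nu,\omega)$ is a (2,3)-cocycle of $T$ with coefficients in the adjoint representation.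
   Context: Throughout, vector spaces are over an algebraically closed field $\mathbb{K}$ of characteristic different from 2 and 3. A Hom-Lie-Yamaguti algebra (HLYA) is a vector space $T$ with a linear map $\alpha:T\to T$, a bilinear map $[\cdot,\cdot]$ and a trilinear map $[\cdot,\cdot,\cdot]$ on $T$ such that for all $x_i,y_i\in T$: (HLY01) $\alpha([x_1,x_2])=[\alpha(x_1),\alpha(x_2)]$; (HLY02) $\alpha([x_1,x_2,x_3])=[\alpha(x_1),\alpha(x_2),\alpha(x_3)]$; (HLY1) $[x_1,x_2]+[x_2,x_1]=0$; (HLY2) $[x_1,x_2,x_3]+[x_2,x_1,x_3]=0$; (HLY3) $\sum_{\mathrm{cyc}(x_1,x_2,x_3)}([[x_1,x_2],\alpha(x_3)]+[x_1,x_2,x_3])=0$; (HLY4) $[[x_1,x_2],\alpha(x_3),\alpha(y_1)]+[[x_2,x_3],\alpha(x_1),\alpha(y_1)]+[[x_3,x_1],\alpha(x_2),\alpha(y_1)]=0$; (HLY5) $[\alpha(x_1),\alpha(x_2),[y_1,y_2]]=[[x_1,x_2,y_1],\alpha^2(y_2)]+[\alpha^2(y_1),[x_1,x_2,y_2]]$; (HLY6) $[\alpha^2(x_1),\alpha^2(x_2),[y_1,y_2,y_3]]=[[x_1,x_2,y_1],\alpha^2(y_2),\alpha^2(y_3)]+[\alpha^2(y_1),[x_1,x_2,y_2],\alpha^2(y_3)]+[\alpha^2(y_1),\alpha^2(y_2),[x_1,x_2,y_3]]$. A HLYA of deformation type is a vector space $T$ with linear $\alpha:T\to T$, bilinear $\nu:T\times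 T\to T$ and trilinear $\omega:T^3\to T$ satisfying (HLY01), (HLY02), (HLY1), (HLY2), (HLY4), (HLY5), (HLY6) with $[\cdot,\cdot]$ replaced by $\nu$ and $[\cdot,\cdot,\cdot]$ replaced by $\omega$, and, instead of (HLY3), the condition (HLY3') $\nu(\nu(x_1,x_2),\alpha(x_3))+\nu(\nu(x_2,x_3),\alpha(x_1))+\nu(\nu(x_3,x_1),\alpha(x_2))=0$. The adjoint representation of the HLYA $(T,\alpha)$ is the representation on the Hom-vector space $(T,\alpha)$ given by $\rho(x_1)(x_2)=[x_1,x_2]$, $D(x_1,x_2)x_3=[x_1,x_2,x_3]$, $\theta(x_1,x_2)x_3=[x_3,x_1,x_2]$ (here $\beta=\alpha$). For a representation $(\rho,D,\theta)$ on $(V,\beta)$ (in particular the adjoint one), a (2,3)-cocycle is a pair $(\nu,\omega)$ of a bilinear map $\nu:T\times T\to V$ and a trilinear map $\omega:T^3\to V$ such that $\nu(x_1,x_2)=-\nu(x_2,x_1)$, $\omega(x_1,x_2,x_3)=-\omega(x_2,x_1,x_3)$, and for all $x_i,y_i\in T$: (CC01) $\nu(\alpha(x_1),\alpha(x_2))=\beta(\nu(x_1,x_2))$; (CC02) $\omega(\alpha(x_1),\alpha(x_2),\alpha(x_3))=\beta(\omega(x_1,x_2,x_3))$; (CC1) $\sum_{\mathrm{cyc}(x_1,x_2,x_3)}\big(\omega(x_1,x_2,x_3)-\rho(\alpha(x_1))\nu(x_2,x_3)+\nu([x_1,x_2],\alpha(x_3))\big)=0$; (CC2) $\sum_{\mathrm{cyc}(x_1,x_2,x_3)}\big(\theta(\alpha(x_1),\alpha(y_1))\nu(x_2,x_3)+\omega([x_1,x_2],\alpha(x_3),\alpha(y_1))\big)=0$;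 (CC3) $\omega(\alpha(x_1),\alpha(x_2),[y_1,y_2])+D(\alpha(x_1),\alpha(x_2))\nu(y_1,y_2)=\nu([x_1,x_2,y_1],\alpha^2(y_2))+\nu(\alpha^2(y_1),[x_1,x_2,y_2])+\rho(\alpha^2(y_1))\omega(x_1,x_2,y_2)-\rho(\alpha^2(y_2))\omega(x_1,x_2,y_1)$; (CC4) $\omega(\alpha^2(x_1),\alpha^2(x_2),[y_1,y_2,y_3])+D(\alpha^2(x_1),\alpha^2(x_2))\omega(y_1,y_2,y_3)=\omega([x_1,x_2,y_1],\alpha^2(y_2),\alpha^2(y_3))+\omega(\alpha^2(y_1),[x_1,x_2,y_2],\alpha^2(y_3))+\omega(\alpha^2(y_1),\alpha^2(y_2),[x_1,x_2,y_3])+\theta(\alpha^2(y_2),\alpha^2(y_3))\omega(x_1,x_2,y_1)-\theta(\alpha^2(y_1),\alpha^2(y_3))\omega(x_1,x_2,y_2)+D(\alpha^2(y_1),\alpha^2(y_2))\omega(x_1,x_2,y_3)$. *)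

theory Defs
  imports Main "HOL-Computational_Algebra.Polynomial"
begin

definition alg_closed_field :: "'k::field itself \<Rightarrow> bool" where
  "alg_closed_field _ \<longleftrightarrow> (\<forall>p :: 'k poly. degree p > 0 \<longrightarrow> (\<exists>z. poly p z = 0))"

definition bilinear_map ::
  "('k::field \<Rightarrow> 'v::ab_group_add \<Rightarrow> 'v) \<Rightarrow> ('k \<Rightarrow> 'w::ab_group_add \<Rightarrow> 'w) \<Rightarrow> ('v \<Rightarrow> 'v \<Rightarrow> 'w) \<Rightarrow> bool" where
  "bilinear_map sc scw f \<longleftrightarrow>
     (\<forall>y. Vector_Spaces.linear sc scw (\<lambda>x. f x y)) \<and>
     (\<forall>x. Vector_Spaces.linear sc scw (\<lambda>y. f x y))"

definition trilinear_map ::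
  "('k::field \<Rightarrow> 'v::ab_group_add \<Rightarrow> 'v) \<Rightarrow> ('k \<Rightarrow> 'w::ab_group_add \<Rightarrow> 'w) \<Rightarrow> ('v \<Rightarrow> 'v \<Rightarrow> 'v \<Rightarrow> 'w) \<Rightarrow> bool" where
  "trilinear_map sc scw f \<longleftrightarrow>
     (\<forall>y z. Vector_Spaces.linear sc scw (\<lambda>x. f x y z)) \<and>
     (\<forall>x z. Vector_Spaces.linear sc scw (\<lambda>y. f x y z)) \<and>
     (\<forall>x y. Vector_Spaces.linear sc scw (\<lambda>z. f x y z))"

text \<open>Axioms (HLY01),(HLY02),(HLY1),(HLY2),(HLY4),(HLY5),(HLY6), common to both notions.\<close>
definition HLY_common ::
  "('v \<Rightarrow> 'v) \<Rightarrow> ('v \<Rightarrow> 'v \<Rightarrow> 'v) \<Rightarrow> ('v \<Rightarrow> 'v \<Rightarrow> 'v \<Rightarrow> 'v::ab_group_add) \<Rightarrow> bool" where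
  "HLY_common \<alpha> b t \<longleftrightarrow>
    (\<forall>x1 x2. \<alpha> (b x1 x2) = b (\<alpha> x1) (\<alpha> x2)) \<and>
    (\<forall>x1 x2 x3. \<alpha> (t x1 x2 x3) = t (\<alpha> x1) (\<alpha> x2) (\<alpha> x3)) \<and>
    (\<forall>x1 x2. b x1 x2 + b x2 x1 = 0) \<and>
    (\<forall>x1 x2 x3. t x1 x2 x3 + t x2 x1 x3 = 0) \<and>
    (\<forall>x1 x2 x3 y1. t (b x1 x2) (\<alpha> x3) (\<alpha> y1) + t (b x2 x3) (\<alpha> x1) (\<alpha> y1)
        + t (b x3 x1) (\<alpha> x2) (\<alpha> y1) = 0) \<and>
    (\<forall>x1 x2 y1 y2. t (\<alpha> x1) (\<alpha> x2) (b y1 y2) =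
        b (t x1 x2 y1) (\<alpha> (\<alpha> y2)) + b (\<alpha> (\<alpha> y1)) (t x1 x2 y2)) \<and>
    (\<forall>x1 x2 y1 y2 y3. t (\<alpha> (\<alpha> x1)) (\<alpha> (\<alpha> x2)) (t y1 y2 y3) =
        t (t x1 x2 y1) (\<alpha> (\<alpha> y2)) (\<alpha> (\<alpha> y3))
      + t (\<alpha> (\<alpha> y1)) (t x1 x2 y2) (\<alpha> (\<alpha> y3))
      + t (\<alpha> (\<alpha> y1)) (\<alpha> (\<alpha> y2)) (t x1 x2 y3))"

definition HLYA ::
  "('k::field \<Rightarrow> 'v::ab_group_add \<Rightarrow> 'v) \<Rightarrow> ('v \<Rightarrow> 'v) \<Rightarrow> ('v \<Rightarrow> 'v \<Rightarrow> 'v) \<Rightarrow> ('v \<Rightarrow> 'v \<Rightarrow> 'v \<Rightarrow> 'v) \<Rightarrow> bool" where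
  "HLYA sc \<alpha> b t \<longleftrightarrow>
    Vector_Spaces.linear sc sc \<alpha> \<and> bilinear_map sc sc b \<and> trilinear_map sc sc t \<and>
    HLY_common \<alpha> b t \<and>
    (\<forall>x1 x2 x3. (b (b x1 x2) (\<alpha> x3) + t x1 x2 x3) + (b (b x2 x3) (\<alpha> x1) + t x2 x3 x1)
        + (b (b x3 x1) (\<alpha> x2) + t x3 x1 x2) = 0)"

text \<open>Hom-Lie-Yamaguti algebra of deformation type: (HLY3) replaced by (HLY3').\<close>
definition HLYA_deformation_type ::
  "('k::field \<Rightarrow> 'v::ab_group_add \<Rightarrow> 'v) \<Rightarrow> ('v \<Rightarrow> 'v) \<Rightarrow> ('v \<Rightarrow> 'v \<Rightarrow> 'v) \<Rightarrow> ('v \<Rightarrow> 'v \<Rightarrow> 'v \<Rightarrow> 'v) \<Rightarrow> bool" where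
  "HLYA_deformation_type sc \<alpha> \<nu> \<omega> \<longleftrightarrow>
    Vector_Spaces.linear sc sc \<alpha> \<and> bilinear_map sc sc \<nu> \<and> trilinear_map sc sc \<omega> \<and>
    HLY_common \<alpha> \<nu> \<omega> \<and>
    (\<forall>x1 x2 x3. \<nu> (\<nu> x1 x2) (\<alpha> x3) + \<nu> (\<nu> x2 x3) (\<alpha> x1) + \<nu> (\<nu> x3 x1) (\<alpha> x2) = 0)"

definition cocycle23 ::
  "('k::field \<Rightarrow> 'v::ab_group_add \<Rightarrow> 'v) \<Rightarrow> ('k \<Rightarrow> 'w::ab_group_add \<Rightarrow> 'w) \<Rightarrow>
   ('v \<Rightarrow> 'v) \<Rightarrow> ('v \<Rightarrow> 'v \<Rightarrow> 'v) \<Rightarrow> ('v \<Rightarrow> 'v \<Rightarrow> 'v \<Rightarrow> 'v) \<Rightarrow>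
   ('w \<Rightarrow> 'w) \<Rightarrow> ('v \<Rightarrow> 'w \<Rightarrow> 'w) \<Rightarrow> ('v \<Rightarrow> 'v \<Rightarrow> 'w \<Rightarrow> 'w) \<Rightarrow> ('v \<Rightarrow> 'v \<Rightarrow> 'w \<Rightarrow> 'w) \<Rightarrow>
   ('v \<Rightarrow> 'v \<Rightarrow> 'w) \<Rightarrow> ('v \<Rightarrow> 'v \<Rightarrow> 'v \<Rightarrow> 'w) \<Rightarrow> bool" where
  "cocycle23 sc scw \<alpha> b t \<beta> \<rho> D \<theta> \<nu> \<omega> \<longleftrightarrow>
    bilinear_map sc scw \<nu> \<and> trilinear_map sc scw \<omega> \<and>
    (\<forall>x1 x2. \<nu> x1 x2 = - \<nu> x2 x1) \<and>
    (\<forall>x1 x2 x3. \<omega> x1 x2 x3 = - \<omega> x2 x1 x3) \<and>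
    (\<forall>x1 x2. \<nu> (\<alpha> x1) (\<alpha> x2) = \<beta> (\<nu> x1 x2)) \<and>
    (\<forall>x1 x2 x3. \<omega> (\<alpha> x1) (\<alpha> x2) (\<alpha> x3) = \<beta> (\<omega> x1 x2 x3)) \<and>
    (\<forall>x1 x2 x3.
       (\<omega> x1 x2 x3 - \<rho> (\<alpha> x1) (\<nu> x2 x3) + \<nu> (b x1 x2) (\<alpha> x3))
     + (\<omega> x2 x3 x1 - \<rho> (\<alpha> x2) (\<nu> x3 x1) + \<nu> (b x2 x3) (\<alpha> x1))
     + (\<omega> x3 x1 x2 - \<rho> (\<alpha> x3) (\<nu> x1 x2) + \<nu> (b x3 x1) (\<alpha> x2)) = 0) \<and>
    (\<forall>x1 x2 x3 y1.
       (\<theta> (\<alpha> x1) (\<alpha> y1) (\<nu> x2 x3) + \<omega> (b x1 x2) (\<alpha> x3) (\<alpha> y1))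
     + (\<theta> (\<alpha> x2) (\<alpha> y1) (\<nu> x3 x1) + \<omega> (b x2 x3) (\<alpha> x1) (\<alpha> y1))
     + (\<theta> (\<alpha> x3) (\<alpha> y1) (\<nu> x1 x2) + \<omega> (b x3 x1) (\<alpha> x2) (\<alpha> y1)) = 0) \<and>
    (\<forall>x1 x2 y1 y2.
       \<omega> (\<alpha> x1) (\<alpha> x2) (b y1 y2) + D (\<alpha> x1) (\<alpha> x2) (\<nu> y1 y2) =
       \<nu> (t x1 x2 y1) (\<alpha> (\<alpha> y2)) + \<nu> (\<alpha> (\<alpha> y1)) (t x1 x2 y2)
       + \<rho> (\<alpha> (\<alpha> y1)) (\<omega> x1 x2 y2) - \<rho> (\<alpha> (\<alpha> y2)) (\<omega> x1 x2 y1)) \<and>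
    (\<forall>x1 x2 y1 y2 y3.
       \<omega> (\<alpha> (\<alpha> x1)) (\<alpha> (\<alpha> x2)) (t y1 y2 y3) + D (\<alpha> (\<alpha> x1)) (\<alpha> (\<alpha> x2)) (\<omega> y1 y2 y3) =
       \<omega> (t x1 x2 y1) (\<alpha> (\<alpha> y2)) (\<alpha> (\<alpha> y3))
       + \<omega> (\<alpha> (\<alpha> y1)) (t x1 x2 y2) (\<alpha> (\<alpha> y3))
       + \<omega> (\<alpha> (\<alpha> y1)) (\<alpha> (\<alpha> y2)) (t x1 x2 y3)
       + \<theta> (\<alpha> (\<alpha> y2)) (\<alpha> (\<alpha> y3)) (\<omega> x1 x2 y1)
       - \<theta> (\<alpha> (\<alpha> y1)) (\<alpha> (\<alpha> y3)) (\<omega> x1 x2 y2)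
       + D (\<alpha> (\<alpha> y1)) (\<alpha> (\<alpha> y2)) (\<omega> x1 x2 y3))"

definition adjoint_cocycle23 ::
  "('k::field \<Rightarrow> 'v::ab_group_add \<Rightarrow> 'v) \<Rightarrow> ('v \<Rightarrow> 'v) \<Rightarrow> ('v \<Rightarrow> 'v \<Rightarrow> 'v) \<Rightarrow> ('v \<Rightarrow> 'v \<Rightarrow> 'v \<Rightarrow> 'v) \<Rightarrow>
   ('v \<Rightarrow> 'v \<Rightarrow> 'v) \<Rightarrow> ('v \<Rightarrow> 'v \<Rightarrow> 'v \<Rightarrow> 'v) \<Rightarrow> bool" where
  "adjoint_cocycle23 sc \<alpha> b t \<nu> \<omega> \<longleftrightarrow>
    cocycle23 sc sc \<alpha> b t \<alpha> (\<lambda>x1 x2. b x1 x2) (\<lambda>x1 x2 x3. t x1 x2 x3)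
      (\<lambda>x1 x2 x3. t x3 x1 x2) \<nu> \<omega>"

definition generates_infinitesimal_deformation ::
  "('k::field \<Rightarrow> 'v::ab_group_add \<Rightarrow> 'v) \<Rightarrow> ('v \<Rightarrow> 'v) \<Rightarrow> ('v \<Rightarrow> 'v \<Rightarrow> 'v) \<Rightarrow> ('v \<Rightarrow> 'v \<Rightarrow> 'v \<Rightarrow> 'v) \<Rightarrow>
   ('v \<Rightarrow> 'v \<Rightarrow> 'v) \<Rightarrow> ('v \<Rightarrow> 'v \<Rightarrow> 'v \<Rightarrow> 'v) \<Rightarrow> bool" where
  "generates_infinitesimal_deformation sc \<alpha> b t \<nu> \<omega> \<longleftrightarrow>
    (\<forall>c::'k. HLYA sc \<alpha> (\<lambda>x1 x2. b x1 x2 + sc c (\<nu> x1 x2))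
                      (\<lambda>x1 x2 x3. t x1 x2 x3 + sc c (\<omega> x1 x2 x3)))"

end

theory Submission
  imports Defs
begin

lemma quad:
  fixes sc :: "'k::field \<Rightarrow> 'v::ab_group_add \<Rightarrow> 'v" and v0 v1 v2 :: 'v
  assumes vs: "vector_space sc" and two: "(2::'k::field) \<noteq> 0"
  shows "(\<forall>c::'k. v0 + sc c v1 + sc (c*c) v2 = (0::'v::ab_group_add)) \<longleftrightarrow> v0 = 0 \<and> v1 = 0 \<and> v2 = 0"
proof -
  interpret V: vector_space sc by fact
  show ?thesis
  proof
    assume A: "\<forall>c::'k. v0 + sc c v1 + sc (c*c) v2 = 0"
    have 0: "v0 = 0" using A[rule_format, of 0] by simp
    have p: "v1 + v2 = 0" using A[rule_format, of 1] 0 by simp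
    have m: "- v1 + v2 = 0" using A[rule_format, of "-1"] 0 by (simp add: V.scale_minus_left)
    have "sc 2 v2 = 0" using p m by (simp add: V.scale_left_distrib[of 1 1, simplified] algebra_simps)
    hence 2: "v2 = 0" using two by simp
    show "v0 = 0 \<and> v1 = 0 \<and> v2 = 0" using 0 2 p by simp
  qed simp
qed

lemma quad_eq:
  fixes sc :: "'k::field \<Rightarrow> 'v::ab_group_add \<Rightarrow> 'v" and va vb vc :: 'v and L R :: "'k \<Rightarrow> 'v"
  assumes vs: "vector_space sc" and two: "(2::'k::field) \<noteq> 0"
    and e: "\<And>c. L c - R c = va + sc c vb + sc (c*c) vc" and z: "va = 0"
  shows "(\<forall>c::'k. L c = (R c::'v::ab_group_add)) \<longleftrightarrow> vb = 0 \<and> vc = 0"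
proof -
  have "(\<forall>c. L c = R c) \<longleftrightarrow> (\<forall>c. va + sc c vb + sc (c*c) vc = 0)"
    using e by (metis right_minus_eq)
  also have "\<dots> \<longleftrightarrow> vb = 0 \<and> vc = 0" using quad[OF vs two, of 0 vb vc] z by simp
  finally show ?thesis .
qed

lemma lin_rules:
  assumes "Vector_Spaces.linear sc sc f"
  shows "f (x + y) = f x + f y" "f (sc c x) = sc c (f x)"
  using assms unfolding Vector_Spaces.linear_iff by auto

lemma bil_rules:
  assumes "bilinear_map sc sc f"
  shows "f (x + y) z = f x z + f y z" "f (sc c x) z = sc c (f x z)"
    "f x (y + z) = f x y + f x z" "f x (sc c y) = sc c (f x y)"
  using assms unfolding bilinear_map_def Vector_Spaces.linear_iff by auto

lemma tri_rules:
  assumes "trilinear_map sc sc f"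
  shows "f (x + y) z u = f x z u + f y z u" "f (sc c x) z u = sc c (f x z u)"
    "f x (y + z) u = f x y u + f x z u" "f x (sc c y) u = sc c (f x y u)"
    "f x z (y + u) = f x z y + f x z u" "f x z (sc c y) = sc c (f x z y)"
  using assms unfolding trilinear_map_def Vector_Spaces.linear_iff by auto

lemma bil_comb:
  assumes vs: "vector_space sc" and "bilinear_map sc sc f" "bilinear_map sc sc g"
  shows "bilinear_map sc sc (\<lambda>x y. f x y + sc c (g x y))"
proof -
  interpret V: vector_space sc by fact
  show ?thesis using assms unfolding bilinear_map_def Vector_Spaces.linear_iff
    by (simp add: bil_rules[OF assms(2)] bil_rules[OF assms(3)] V.scale_right_distrib
        V.scale_left_commute[of c] algebra_simps)
qed

lemma tri_comb:
  assumes vs: "vector_space sc" and "trilinear_map sc sc f" "trilinear_map sc sc g"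
  shows "trilinear_map sc sc (\<lambda>x y z. f x y z + sc c (g x y z))"
proof -
  interpret V: vector_space sc by fact
  show ?thesis using assms unfolding trilinear_map_def Vector_Spaces.linear_iff
    by (simp add: tri_rules[OF assms(2)] tri_rules[OF assms(3)] V.scale_right_distrib
        V.scale_left_commute[of c] algebra_simps)
qed

lemma comb_diff:
  assumes "vector_space sc"
  shows "(a0 + sc c a1 + sc d a2) - (b0 + sc c b1 + sc d b2) = (a0 - b0) + sc c (a1 - b1) + sc d (a2 - b2)"
proof -
  interpret V: vector_space sc by fact
  show ?thesis by (simp add: V.scale_right_diff_distrib algebra_simps)
qed

lemma comb_add:
  assumes "vector_space sc"
  shows "(a0 + sc c a1 + sc d a2) + (b0 + sc c b1 + sc d b2) = (a0 + b0) + sc c (a1 + b1) + sc d (a2 + b2)"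
proof -
  interpret V: vector_space sc by fact
  show ?thesis by (simp add: V.scale_right_distrib algebra_simps)
qed

theorem theorem3p1:
  fixes sc :: "'k::field \<Rightarrow> 'v::ab_group_add \<Rightarrow> 'v"
    and \<alpha> :: "'v \<Rightarrow> 'v"
    and b \<nu> :: "'v \<Rightarrow> 'v \<Rightarrow> 'v"
    and t \<omega> :: "'v \<Rightarrow> 'v \<Rightarrow> 'v \<Rightarrow> 'v"
  assumes "alg_closed_field TYPE('k)"
    and "(2::'k) \<noteq> 0" and "(3::'k) \<noteq> 0"
    and "vector_space sc"
    and "HLYA sc \<alpha> b t"
    and "bilinear_map sc sc \<nu>"
    and "trilinear_map sc sc \<omega>"
  shows "generates_infinitesimal_deformation sc \<alpha> b t \<nu> \<omega> \<longleftrightarrow>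
         (HLYA_deformation_type sc \<alpha> \<nu> \<omega> \<and> adjoint_cocycle23 sc \<alpha> b t \<nu> \<omega>)"
proof -
  note vs = assms(4) and two = assms(2)
  interpret V: vector_space sc by fact
  have linA: "Vector_Spaces.linear sc sc \<alpha>" and bilb: "bilinear_map sc sc b"
    and trit: "trilinear_map sc sc t" and com: "HLY_common \<alpha> b t"
    and h3: "\<And>x1 x2 x3. (b (b x1 x2) (\<alpha> x3) + t x1 x2 x3) + (b (b x2 x3) (\<alpha> x1) + t x2 x3 x1)
        + (b (b x3 x1) (\<alpha> x2) + t x3 x1 x2) = 0"
    using assms(5) unfolding HLYA_def by auto
  note bn = assms(6) and tw = assms(7)
  note R = lin_rules[OF linA] bil_rules[OF bilb] tri_rules[OF trit] bil_rules[OF bn] tri_rules[OF tw]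
     V.scale_right_distrib V.scale_right_diff_distrib
  note cc = com[unfolded HLY_common_def]
  note c1 = cc[THEN conjunct1, rule_format]
  note c2 = cc[THEN conjunct2, THEN conjunct1, rule_format]
  note c3 = cc[THEN conjunct2, THEN conjunct2, THEN conjunct1, rule_format]
  note c4 = cc[THEN conjunct2, THEN conjunct2, THEN conjunct2, THEN conjunct1, rule_format]
  note c5 = cc[THEN conjunct2, THEN conjunct2, THEN conjunct2, THEN conjunct2, THEN conjunct1, rule_format]
  note c6 = cc[THEN conjunct2, THEN conjunct2, THEN conjunct2, THEN conjunct2, THEN conjunct2, THEN conjunct1, rule_format]
  note c7 = cc[THEN conjunct2, THEN conjunct2, THEN conjunct2, THEN conjunct2, THEN conjunct2, THEN conjunct2, rule_format]
  have banti: "\<And>x y. b x y = - b y x" using c3 by (metis eq_neg_iff_add_eq_0)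
  have tanti: "\<And>x y z. t x y z = - t y x z" using c4 by (metis eq_neg_iff_add_eq_0)
  define B where "B = (\<lambda>(c::'k) x1 x2. b x1 x2 + sc c (\<nu> x1 x2))"
  define T where "T = (\<lambda>(c::'k) x1 x2 x3. t x1 x2 x3 + sc c (\<omega> x1 x2 x3))"
  have K1: "\<And>x1 x2. (\<forall>c. \<alpha> (B c x1 x2) = B c (\<alpha> x1) (\<alpha> x2)) \<longleftrightarrow>
      (\<alpha> (\<nu> x1 x2) = \<nu> (\<alpha> x1) (\<alpha> x2) \<and> \<nu> (\<alpha> x1) (\<alpha> x2) = \<alpha> (\<nu> x1 x2))"
  proof -
    fix x1 x2
    have "(\<forall>c. \<alpha> (B c x1 x2) = B c (\<alpha> x1) (\<alpha> x2)) \<longleftrightarrow>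
       (\<alpha> (\<nu> x1 x2) - \<nu> (\<alpha> x1) (\<alpha> x2) = 0 \<and> (0::'v) = 0)"
      by (rule quad_eq[OF vs two, where va = "\<alpha> (b x1 x2) - b (\<alpha> x1) (\<alpha> x2)"])
         (simp add: B_def R algebra_simps, simp only: right_minus_eq c1)
    thus "?thesis x1 x2" by auto
  qed
  have K2: "\<And>x1 x2 x3. (\<forall>c. \<alpha> (T c x1 x2 x3) = T c (\<alpha> x1) (\<alpha> x2) (\<alpha> x3)) \<longleftrightarrow>
      (\<alpha> (\<omega> x1 x2 x3) = \<omega> (\<alpha> x1) (\<alpha> x2) (\<alpha> x3) \<and> \<omega> (\<alpha> x1) (\<alpha> x2) (\<alpha> x3) = \<alpha> (\<omega> x1 x2 x3))"
  proof -
    fix x1 x2 x3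
    have "(\<forall>c. \<alpha> (T c x1 x2 x3) = T c (\<alpha> x1) (\<alpha> x2) (\<alpha> x3)) \<longleftrightarrow>
       (\<alpha> (\<omega> x1 x2 x3) - \<omega> (\<alpha> x1) (\<alpha> x2) (\<alpha> x3) = 0 \<and> (0::'v) = 0)"
      by (rule quad_eq[OF vs two, where va = "\<alpha> (t x1 x2 x3) - t (\<alpha> x1) (\<alpha> x2) (\<alpha> x3)"])
         (simp add: T_def R algebra_simps, simp only: right_minus_eq c2)
    thus "?thesis x1 x2 x3" by auto
  qed
  have K3: "\<And>x1 x2. (\<forall>c. B c x1 x2 + B c x2 x1 = 0) \<longleftrightarrow>
      (\<nu> x1 x2 + \<nu> x2 x1 = 0 \<and> \<nu> x1 x2 = - \<nu> x2 x1)"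
  proof -
    fix x1 x2
    have "(\<forall>c. B c x1 x2 + B c x2 x1 = 0) \<longleftrightarrow> (\<nu> x1 x2 + \<nu> x2 x1 = 0 \<and> (0::'v) = 0)"
      by (rule quad_eq[OF vs two, where va = "b x1 x2 + b x2 x1"])
         (simp add: B_def R algebra_simps, rule c3)
    thus "?thesis x1 x2" by (auto simp: eq_neg_iff_add_eq_0)
  qed
  have K4: "\<And>x1 x2 x3. (\<forall>c. T c x1 x2 x3 + T c x2 x1 x3 = 0) \<longleftrightarrow>
      (\<omega> x1 x2 x3 + \<omega> x2 x1 x3 = 0 \<and> \<omega> x1 x2 x3 = - \<omega> x2 x1 x3)"
  proof -
    fix x1 x2 x3
    have "(\<forall>c. T c x1 x2 x3 + T c x2 x1 x3 = 0) \<longleftrightarrow> (\<omega> x1 x2 x3 + \<omega> x2 x1 x3 = 0 \<and> (0::'v) = 0)"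
      by (rule quad_eq[OF vs two, where va = "t x1 x2 x3 + t x2 x1 x3"])
         (simp add: T_def R algebra_simps, rule c4)
    thus "?thesis x1 x2 x3" by (auto simp: eq_neg_iff_add_eq_0)
  qed
  have K5: "\<And>x1 x2 x3 y1. (\<forall>c. T c (B c x1 x2) (\<alpha> x3) (\<alpha> y1) + T c (B c x2 x3) (\<alpha> x1) (\<alpha> y1)
        + T c (B c x3 x1) (\<alpha> x2) (\<alpha> y1) = 0) \<longleftrightarrow>
     (\<omega> (\<nu> x1 x2) (\<alpha> x3) (\<alpha> y1) + \<omega> (\<nu> x2 x3) (\<alpha> x1) (\<alpha> y1) + \<omega> (\<nu> x3 x1) (\<alpha> x2) (\<alpha> y1) = 0 \<and>
      (t (\<nu> x2 x3) (\<alpha> x1) (\<alpha> y1) + \<omega> (b x1 x2) (\<alpha> x3) (\<alpha> y1))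
     + (t (\<nu> x3 x1) (\<alpha> x2) (\<alpha> y1) + \<omega> (b x2 x3) (\<alpha> x1) (\<alpha> y1))
     + (t (\<nu> x1 x2) (\<alpha> x3) (\<alpha> y1) + \<omega> (b x3 x1) (\<alpha> x2) (\<alpha> y1)) = 0)"
  proof -
    fix x1 x2 x3 y1
    have "(\<forall>c. T c (B c x1 x2) (\<alpha> x3) (\<alpha> y1) + T c (B c x2 x3) (\<alpha> x1) (\<alpha> y1)
        + T c (B c x3 x1) (\<alpha> x2) (\<alpha> y1) = 0) \<longleftrightarrow>
     (((t (\<nu> x2 x3) (\<alpha> x1) (\<alpha> y1) + \<omega> (b x1 x2) (\<alpha> x3) (\<alpha> y1))
     + (t (\<nu> x3 x1) (\<alpha> x2) (\<alpha> y1) + \<omega> (b x2 x3) (\<alpha> x1) (\<alpha> y1))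
     + (t (\<nu> x1 x2) (\<alpha> x3) (\<alpha> y1) + \<omega> (b x3 x1) (\<alpha> x2) (\<alpha> y1))) = 0 \<and>
     \<omega> (\<nu> x1 x2) (\<alpha> x3) (\<alpha> y1) + \<omega> (\<nu> x2 x3) (\<alpha> x1) (\<alpha> y1) + \<omega> (\<nu> x3 x1) (\<alpha> x2) (\<alpha> y1) = 0)"
      by (rule quad_eq[OF vs two, where va = "t (b x1 x2) (\<alpha> x3) (\<alpha> y1) + t (b x2 x3) (\<alpha> x1) (\<alpha> y1)
        + t (b x3 x1) (\<alpha> x2) (\<alpha> y1)"])
         (simp add: T_def B_def R algebra_simps, rule c5)
    thus "?thesis x1 x2 x3 y1" by auto
  qed
  have K6: "\<And>x1 x2 y1 y2. (\<forall>c. T c (\<alpha> x1) (\<alpha> x2) (B c y1 y2) =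
        B c (T c x1 x2 y1) (\<alpha> (\<alpha> y2)) + B c (\<alpha> (\<alpha> y1)) (T c x1 x2 y2)) \<longleftrightarrow>
     (\<omega> (\<alpha> x1) (\<alpha> x2) (\<nu> y1 y2) =
        \<nu> (\<omega> x1 x2 y1) (\<alpha> (\<alpha> y2)) + \<nu> (\<alpha> (\<alpha> y1)) (\<omega> x1 x2 y2) \<and>
      \<omega> (\<alpha> x1) (\<alpha> x2) (b y1 y2) + t (\<alpha> x1) (\<alpha> x2) (\<nu> y1 y2) =
       \<nu> (t x1 x2 y1) (\<alpha> (\<alpha> y2)) + \<nu> (\<alpha> (\<alpha> y1)) (t x1 x2 y2)
       + b (\<alpha> (\<alpha> y1)) (\<omega> x1 x2 y2) - b (\<alpha> (\<alpha> y2)) (\<omega> x1 x2 y1))"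
  proof -
    fix x1 x2 y1 y2
    have a1: "b (\<omega> x1 x2 y1) (\<alpha> (\<alpha> y2)) = - b (\<alpha> (\<alpha> y2)) (\<omega> x1 x2 y1)" by (rule banti)
    have "(\<forall>c. T c (\<alpha> x1) (\<alpha> x2) (B c y1 y2) =
        B c (T c x1 x2 y1) (\<alpha> (\<alpha> y2)) + B c (\<alpha> (\<alpha> y1)) (T c x1 x2 y2)) \<longleftrightarrow>
      ((\<omega> (\<alpha> x1) (\<alpha> x2) (b y1 y2) + t (\<alpha> x1) (\<alpha> x2) (\<nu> y1 y2)) -
       (\<nu> (t x1 x2 y1) (\<alpha> (\<alpha> y2)) + \<nu> (\<alpha> (\<alpha> y1)) (t x1 x2 y2)
       + b (\<alpha> (\<alpha> y1)) (\<omega> x1 x2 y2) - b (\<alpha> (\<alpha> y2)) (\<omega> x1 x2 y1)) = 0 \<and>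
       \<omega> (\<alpha> x1) (\<alpha> x2) (\<nu> y1 y2) -
        (\<nu> (\<omega> x1 x2 y1) (\<alpha> (\<alpha> y2)) + \<nu> (\<alpha> (\<alpha> y1)) (\<omega> x1 x2 y2)) = 0)"
      by (rule quad_eq[OF vs two, where va = "t (\<alpha> x1) (\<alpha> x2) (b y1 y2) -
        (b (t x1 x2 y1) (\<alpha> (\<alpha> y2)) + b (\<alpha> (\<alpha> y1)) (t x1 x2 y2))"])
         (simp add: T_def B_def R a1 algebra_simps, simp only: right_minus_eq, rule c6)
    thus "?thesis x1 x2 y1 y2" by (simp only: right_minus_eq conj_commute)
  qed
  have e1: "\<And>c x1 x2 y1 y2 y3. T c (\<alpha> (\<alpha> x1)) (\<alpha> (\<alpha> x2)) (T c y1 y2 y3) = t (\<alpha> (\<alpha> x1)) (\<alpha> (\<alpha> x2)) (t y1 y2 y3) + sc c (\<omega> (\<alpha> (\<alpha> x1)) (\<alpha> (\<alpha> x2)) (t y1 y2 y3) + t (\<alpha> (\<alpha> x1)) (\<alpha> (\<alpha> x2)) (\<omega> y1 y2 y3)) + sc (c*c) (\<omega> (\<alpha> (\<alpha> x1)) (\<alpha> (\<alpha> x2)) (\<omega> y1 y2 y3))"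
    by (simp add: T_def R algebra_simps)
  have e2: "\<And>c x1 x2 y1 y2 y3. T c (T c x1 x2 y1) (\<alpha> (\<alpha> y2)) (\<alpha> (\<alpha> y3)) = t (t x1 x2 y1) (\<alpha> (\<alpha> y2)) (\<alpha> (\<alpha> y3)) + sc c (\<omega> (t x1 x2 y1) (\<alpha> (\<alpha> y2)) (\<alpha> (\<alpha> y3)) + t (\<omega> x1 x2 y1) (\<alpha> (\<alpha> y2)) (\<alpha> (\<alpha> y3))) + sc (c*c) (\<omega> (\<omega> x1 x2 y1) (\<alpha> (\<alpha> y2)) (\<alpha> (\<alpha> y3)))"
    by (simp add: T_def R algebra_simps)
  have e3: "\<And>c x1 x2 y1 y2 y3. T c (\<alpha> (\<alpha> y1)) (T c x1 x2 y2) (\<alpha> (\<alpha> y3)) = t (\<alpha> (\<alpha> y1)) (t x1 x2 y2) (\<alpha> (\<alpha> y3)) + sc c (\<omega> (\<alpha> (\<alpha> y1)) (t x1 x2 y2) (\<alpha> (\<alpha> y3)) + t (\<alpha> (\<alpha> y1)) (\<omega> x1 x2 y2) (\<alpha> (\<alpha> y3))) + sc (c*c) (\<omega> (\<alpha> (\<alpha> y1)) (\<omega> x1 x2 y2) (\<alpha> (\<alpha> y3)))"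
    by (simp add: T_def R algebra_simps)
  have e4: "\<And>c x1 x2 y1 y2 y3. T c (\<alpha> (\<alpha> y1)) (\<alpha> (\<alpha> y2)) (T c x1 x2 y3) = t (\<alpha> (\<alpha> y1)) (\<alpha> (\<alpha> y2)) (t x1 x2 y3) + sc c (\<omega> (\<alpha> (\<alpha> y1)) (\<alpha> (\<alpha> y2)) (t x1 x2 y3) + t (\<alpha> (\<alpha> y1)) (\<alpha> (\<alpha> y2)) (\<omega> x1 x2 y3)) + sc (c*c) (\<omega> (\<alpha> (\<alpha> y1)) (\<alpha> (\<alpha> y2)) (\<omega> x1 x2 y3))"
    by (simp add: T_def R algebra_simps)
  have K7: "\<And>x1 x2 y1 y2 y3. (\<forall>c. T c (\<alpha> (\<alpha> x1)) (\<alpha> (\<alpha> x2)) (T c y1 y2 y3) =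
        T c (T c x1 x2 y1) (\<alpha> (\<alpha> y2)) (\<alpha> (\<alpha> y3))
      + T c (\<alpha> (\<alpha> y1)) (T c x1 x2 y2) (\<alpha> (\<alpha> y3))
      + T c (\<alpha> (\<alpha> y1)) (\<alpha> (\<alpha> y2)) (T c x1 x2 y3)) \<longleftrightarrow>
     (\<omega> (\<alpha> (\<alpha> x1)) (\<alpha> (\<alpha> x2)) (\<omega> y1 y2 y3) =
        \<omega> (\<omega> x1 x2 y1) (\<alpha> (\<alpha> y2)) (\<alpha> (\<alpha> y3))
      + \<omega> (\<alpha> (\<alpha> y1)) (\<omega> x1 x2 y2) (\<alpha> (\<alpha> y3))
      + \<omega> (\<alpha> (\<alpha> y1)) (\<alpha> (\<alpha> y2)) (\<omega> x1 x2 y3) \<and>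
      \<omega> (\<alpha> (\<alpha> x1)) (\<alpha> (\<alpha> x2)) (t y1 y2 y3) + t (\<alpha> (\<alpha> x1)) (\<alpha> (\<alpha> x2)) (\<omega> y1 y2 y3) =
       \<omega> (t x1 x2 y1) (\<alpha> (\<alpha> y2)) (\<alpha> (\<alpha> y3))
       + \<omega> (\<alpha> (\<alpha> y1)) (t x1 x2 y2) (\<alpha> (\<alpha> y3))
       + \<omega> (\<alpha> (\<alpha> y1)) (\<alpha> (\<alpha> y2)) (t x1 x2 y3)
       + t (\<omega> x1 x2 y1) (\<alpha> (\<alpha> y2)) (\<alpha> (\<alpha> y3))
       - t (\<omega> x1 x2 y2) (\<alpha> (\<alpha> y1)) (\<alpha> (\<alpha> y3))
       + t (\<alpha> (\<alpha> y1)) (\<alpha> (\<alpha> y2)) (\<omega> x1 x2 y3))"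
  proof -
    fix x1 x2 y1 y2 y3
    have a1: "t (\<alpha> (\<alpha> y1)) (\<omega> x1 x2 y2) (\<alpha> (\<alpha> y3)) = - t (\<omega> x1 x2 y2) (\<alpha> (\<alpha> y1)) (\<alpha> (\<alpha> y3))"
      by (rule tanti)
    have raw: "(\<forall>c. T c (\<alpha> (\<alpha> x1)) (\<alpha> (\<alpha> x2)) (T c y1 y2 y3) =
        T c (T c x1 x2 y1) (\<alpha> (\<alpha> y2)) (\<alpha> (\<alpha> y3))
      + T c (\<alpha> (\<alpha> y1)) (T c x1 x2 y2) (\<alpha> (\<alpha> y3))
      + T c (\<alpha> (\<alpha> y1)) (\<alpha> (\<alpha> y2)) (T c x1 x2 y3)) \<longleftrightarrow>
     ((\<omega> (\<alpha> (\<alpha> x1)) (\<alpha> (\<alpha> x2)) (t y1 y2 y3) + t (\<alpha> (\<alpha> x1)) (\<alpha> (\<alpha> x2)) (\<omega> y1 y2 y3)) -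
      (((\<omega> (t x1 x2 y1) (\<alpha> (\<alpha> y2)) (\<alpha> (\<alpha> y3)) + t (\<omega> x1 x2 y1) (\<alpha> (\<alpha> y2)) (\<alpha> (\<alpha> y3)))
       + (\<omega> (\<alpha> (\<alpha> y1)) (t x1 x2 y2) (\<alpha> (\<alpha> y3)) + t (\<alpha> (\<alpha> y1)) (\<omega> x1 x2 y2) (\<alpha> (\<alpha> y3))))
       + (\<omega> (\<alpha> (\<alpha> y1)) (\<alpha> (\<alpha> y2)) (t x1 x2 y3) + t (\<alpha> (\<alpha> y1)) (\<alpha> (\<alpha> y2)) (\<omega> x1 x2 y3))) = 0 \<and>
      \<omega> (\<alpha> (\<alpha> x1)) (\<alpha> (\<alpha> x2)) (\<omega> y1 y2 y3) -
       ((\<omega> (\<omega> x1 x2 y1) (\<alpha> (\<alpha> y2)) (\<alpha> (\<alpha> y3))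
      + \<omega> (\<alpha> (\<alpha> y1)) (\<omega> x1 x2 y2) (\<alpha> (\<alpha> y3)))
      + \<omega> (\<alpha> (\<alpha> y1)) (\<alpha> (\<alpha> y2)) (\<omega> x1 x2 y3)) = 0)"
      by (rule quad_eq[OF vs two, where va = "t (\<alpha> (\<alpha> x1)) (\<alpha> (\<alpha> x2)) (t y1 y2 y3) -
       ((t (t x1 x2 y1) (\<alpha> (\<alpha> y2)) (\<alpha> (\<alpha> y3))
      + t (\<alpha> (\<alpha> y1)) (t x1 x2 y2) (\<alpha> (\<alpha> y3)))
      + t (\<alpha> (\<alpha> y1)) (\<alpha> (\<alpha> y2)) (t x1 x2 y3))"])
         (simp add: T_def R algebra_simps, simp only: right_minus_eq, rule c7)
    have q: "((\<omega> (t x1 x2 y1) (\<alpha> (\<alpha> y2)) (\<alpha> (\<alpha> y3)) + t (\<omega> x1 x2 y1) (\<alpha> (\<alpha> y2)) (\<alpha> (\<alpha> y3)))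
       + (\<omega> (\<alpha> (\<alpha> y1)) (t x1 x2 y2) (\<alpha> (\<alpha> y3)) + t (\<alpha> (\<alpha> y1)) (\<omega> x1 x2 y2) (\<alpha> (\<alpha> y3))))
       + (\<omega> (\<alpha> (\<alpha> y1)) (\<alpha> (\<alpha> y2)) (t x1 x2 y3) + t (\<alpha> (\<alpha> y1)) (\<alpha> (\<alpha> y2)) (\<omega> x1 x2 y3)) =
       \<omega> (t x1 x2 y1) (\<alpha> (\<alpha> y2)) (\<alpha> (\<alpha> y3))
       + \<omega> (\<alpha> (\<alpha> y1)) (t x1 x2 y2) (\<alpha> (\<alpha> y3))
       + \<omega> (\<alpha> (\<alpha> y1)) (\<alpha> (\<alpha> y2)) (t x1 x2 y3)
       + t (\<omega> x1 x2 y1) (\<alpha> (\<alpha> y2)) (\<alpha> (\<alpha> y3))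
       - t (\<omega> x1 x2 y2) (\<alpha> (\<alpha> y1)) (\<alpha> (\<alpha> y3))
       + t (\<alpha> (\<alpha> y1)) (\<alpha> (\<alpha> y2)) (\<omega> x1 x2 y3)"
      by (simp add: a1 algebra_simps)
    show "?thesis x1 x2 y1 y2 y3" using raw unfolding right_minus_eq unfolding q unfolding add.assoc by blast
  qed
  have K8: "\<And>x1 x2 x3. (\<forall>c. (B c (B c x1 x2) (\<alpha> x3) + T c x1 x2 x3) + (B c (B c x2 x3) (\<alpha> x1) + T c x2 x3 x1)
        + (B c (B c x3 x1) (\<alpha> x2) + T c x3 x1 x2) = 0) \<longleftrightarrow>
      (\<nu> (\<nu> x1 x2) (\<alpha> x3) + \<nu> (\<nu> x2 x3) (\<alpha> x1) + \<nu> (\<nu> x3 x1) (\<alpha> x2) = 0 \<and>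
       (\<omega> x1 x2 x3 - b (\<alpha> x1) (\<nu> x2 x3) + \<nu> (b x1 x2) (\<alpha> x3))
     + (\<omega> x2 x3 x1 - b (\<alpha> x2) (\<nu> x3 x1) + \<nu> (b x2 x3) (\<alpha> x1))
     + (\<omega> x3 x1 x2 - b (\<alpha> x3) (\<nu> x1 x2) + \<nu> (b x3 x1) (\<alpha> x2)) = 0)"
  proof -
    fix x1 x2 x3
    have a1: "b (\<nu> x1 x2) (\<alpha> x3) = - b (\<alpha> x3) (\<nu> x1 x2)"
      and a2: "b (\<nu> x2 x3) (\<alpha> x1) = - b (\<alpha> x1) (\<nu> x2 x3)"
      and a3: "b (\<nu> x3 x1) (\<alpha> x2) = - b (\<alpha> x2) (\<nu> x3 x1)" by (rule banti)+
    have "(\<forall>c. (B c (B c x1 x2) (\<alpha> x3) + T c x1 x2 x3) + (B c (B c x2 x3) (\<alpha> x1) + T c x2 x3 x1)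
        + (B c (B c x3 x1) (\<alpha> x2) + T c x3 x1 x2) = 0) \<longleftrightarrow>
      ((\<omega> x1 x2 x3 - b (\<alpha> x1) (\<nu> x2 x3) + \<nu> (b x1 x2) (\<alpha> x3))
     + (\<omega> x2 x3 x1 - b (\<alpha> x2) (\<nu> x3 x1) + \<nu> (b x2 x3) (\<alpha> x1))
     + (\<omega> x3 x1 x2 - b (\<alpha> x3) (\<nu> x1 x2) + \<nu> (b x3 x1) (\<alpha> x2)) = 0 \<and>
       \<nu> (\<nu> x1 x2) (\<alpha> x3) + \<nu> (\<nu> x2 x3) (\<alpha> x1) + \<nu> (\<nu> x3 x1) (\<alpha> x2) = 0)"
      by (rule quad_eq[OF vs two, where va = "(b (b x1 x2) (\<alpha> x3) + t x1 x2 x3) + (b (b x2 x3) (\<alpha> x1) + t x2 x3 x1)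
        + (b (b x3 x1) (\<alpha> x2) + t x3 x1 x2)"])
         (simp add: T_def B_def R a1 a2 a3 algebra_simps, rule h3)
    thus "?thesis x1 x2 x3" by auto
  qed
  have G: "generates_infinitesimal_deformation sc \<alpha> b t \<nu> \<omega> \<longleftrightarrow> (\<forall>c. HLYA sc \<alpha> (B c) (T c))"
    unfolding generates_infinitesimal_deformation_def B_def T_def by simp
  have BT: "\<And>c. bilinear_map sc sc (B c)" "\<And>c. trilinear_map sc sc (T c)"
    unfolding B_def T_def by (rule bil_comb[OF vs bilb bn], rule tri_comb[OF vs trit tw])
  have G2: "(\<forall>c. HLYA sc \<alpha> (B c) (T c)) \<longleftrightarrow>
     (\<forall>x1 x2. \<forall>c. \<alpha> (B c x1 x2) = B c (\<alpha> x1) (\<alpha> x2)) \<and>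
     (\<forall>x1 x2 x3. \<forall>c. \<alpha> (T c x1 x2 x3) = T c (\<alpha> x1) (\<alpha> x2) (\<alpha> x3)) \<and>
     (\<forall>x1 x2. \<forall>c. B c x1 x2 + B c x2 x1 = 0) \<and>
     (\<forall>x1 x2 x3. \<forall>c. T c x1 x2 x3 + T c x2 x1 x3 = 0) \<and>
     (\<forall>x1 x2 x3 y1. \<forall>c. T c (B c x1 x2) (\<alpha> x3) (\<alpha> y1) + T c (B c x2 x3) (\<alpha> x1) (\<alpha> y1)
        + T c (B c x3 x1) (\<alpha> x2) (\<alpha> y1) = 0) \<and>
     (\<forall>x1 x2 y1 y2. \<forall>c. T c (\<alpha> x1) (\<alpha> x2) (B c y1 y2) =
        B c (T c x1 x2 y1) (\<alpha> (\<alpha> y2)) + B c (\<alpha> (\<alpha> y1)) (T c x1 x2 y2)) \<and>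
     (\<forall>x1 x2 y1 y2 y3. \<forall>c. T c (\<alpha> (\<alpha> x1)) (\<alpha> (\<alpha> x2)) (T c y1 y2 y3) =
        T c (T c x1 x2 y1) (\<alpha> (\<alpha> y2)) (\<alpha> (\<alpha> y3))
      + T c (\<alpha> (\<alpha> y1)) (T c x1 x2 y2) (\<alpha> (\<alpha> y3))
      + T c (\<alpha> (\<alpha> y1)) (\<alpha> (\<alpha> y2)) (T c x1 x2 y3)) \<and>
     (\<forall>x1 x2 x3. \<forall>c. (B c (B c x1 x2) (\<alpha> x3) + T c x1 x2 x3) + (B c (B c x2 x3) (\<alpha> x1) + T c x2 x3 x1)
        + (B c (B c x3 x1) (\<alpha> x2) + T c x3 x1 x2) = 0)"
    unfolding HLYA_def HLY_common_def
    apply (simp only: linA BT simp_thms all_conj_distrib conj_assoc)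
    apply (intro conj_cong)
                 apply blast+
    done
  show ?thesis
    unfolding G G2 K1 K2 K3 K4 K5 K6 K7 K8
    unfolding HLYA_deformation_type_def adjoint_cocycle23_def cocycle23_def HLY_common_def
    by (simp only: all_conj_distrib linA bn tw simp_thms conj_assoc conj_comms)
qed

end
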